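(* Let $M = \{ y = \psi(x) \}\subset\mathbb C^n$ be a $\mathcal C^2$-smooth graph at the origin (so $\psi(0)=0$) with $d\psi(0) = 0$. Then for any open set $U$ containing the origin, there exists a holomorphic embedding $\phi \colon \triangle^{n} \to U$ with $0\in\phi(\triangle^n)$ and $\phi(H^1)\cap M=\emptyset$.
   Context: Coordinates on $\mathbb C^n$ are $z=x+iy$ with $x,y\in\mathbb R^n$, and $\psi$ is defined near $0\in\mathbb R^n$ with values in $\mathbb R^n$. $\triangle$ is the open unit disc, $G^{k}(r,s):=s\triangle^{k}\setminus r\overline\triangle^{k}$, and $H^1:=(\triangle\times G^{n-1}(1/2,1))\cup(\tfrac12\triangle\times\triangle^{n-1})$ is the standard $1$-Hartogs figure. *)

theory Defs
  imports "HOL-Analysis.Analysis"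
begin

text \<open>Coordinates on C^n: C^n is complex^'n; the index type 'n is finite and
  well-ordered, so it has a distinguished first coordinate.\<close>

definition re_part :: "complex ^ 'n \<Rightarrow> real ^ 'n" where
  "re_part z = (\<chi> i. Re (z $ i))"

definition im_part :: "complex ^ 'n \<Rightarrow> real ^ 'n" where
  "im_part z = (\<chi> i. Im (z $ i))"

definition C2_on :: "(real ^ 'n) set \<Rightarrow> (real ^ 'n \<Rightarrow> real ^ 'n)
     \<Rightarrow> (real ^ 'n \<Rightarrow> ((real ^ 'n) \<Rightarrow>\<^sub>L (real ^ 'n))) \<Rightarrow> bool" where
  "C2_on V f D \<longleftrightarrow>
     (\<forall>x\<in>V. (f has_derivative blinfun_apply (D x)) (at x)) \<and>
     (\<exists>D2. (\<forall>x\<in>V. (D has_derivative blinfun_apply (D2 x)) (at x)) \<and> continuous_on V D2)"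

definition holomorphic_n :: "(complex ^ 'n \<Rightarrow> complex ^ 'm) \<Rightarrow> (complex ^ 'n) set \<Rightarrow> bool" where
  "holomorphic_n f S \<longleftrightarrow> open S \<and>
     (\<forall>z\<in>S. \<exists>L. (f has_derivative L) (at z) \<and> (\<forall>c v. L (c *s v) = c *s L v))"

definition holomorphic_embedding :: "(complex ^ 'n \<Rightarrow> complex ^ 'm) \<Rightarrow> (complex ^ 'n) set \<Rightarrow> bool" where
  "holomorphic_embedding f S \<longleftrightarrow> holomorphic_n f S \<and> inj_on f S \<and>
     (\<forall>z\<in>S. \<forall>L. (f has_derivative L) (at z) \<longrightarrow> inj L) \<and>
     (\<exists>g. homeomorphism S (f ` S) f g)"

definition polydisc :: "real \<Rightarrow> 'n set \<Rightarrow> (complex ^ 'n) set" where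
  "polydisc r I = {z. \<forall>i\<in>I. cmod (z $ i) < r}"

definition cpolydisc :: "real \<Rightarrow> 'n set \<Rightarrow> (complex ^ 'n) set" where
  "cpolydisc r I = {z. \<forall>i\<in>I. cmod (z $ i) \<le> r}"

definition first_idx :: "'n::wellorder" where
  "first_idx = (LEAST i. True)"

definition unit_polydisc :: "(complex ^ 'n) set" where
  "unit_polydisc = polydisc 1 UNIV"

text \<open>Standard 1-Hartogs figure
  H^1 = (\<triangle> \<times> G^{n-1}(1/2,1)) \<union> (1/2 \<triangle> \<times> \<triangle>^{n-1}),
  G^k(r,s) = s\<triangle>^k \<setminus> r closure(\<triangle>^k); first factor = first coordinate.\<close>
definition hartogs1 :: "(complex ^ 'n::{finite,wellorder}) set" where
  "hartogs1 =
    ({z. cmod (z $ first_idx) < 1} \<inter>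
       (polydisc 1 (- {first_idx}) - cpolydisc (1/2) (- {first_idx})))
    \<union> ({z. cmod (z $ first_idx) < 1/2} \<inter> polydisc 1 (- {first_idx}))"

end

theory Submission imports Defs begin

definition qf :: "'n::finite \<Rightarrow> complex^'n \<Rightarrow> complex" where
  "qf k z = 3/5 + 2 * (\<Sum>j\<in>-{k}. (z$j)^2)"
definition Tf :: "'n::finite \<Rightarrow> complex^'n \<Rightarrow> complex^'n" where
  "Tf k z = z + axis k (\<i> * qf k z)"
definition Tinv :: "'n::finite \<Rightarrow> complex^'n \<Rightarrow> complex^'n" where
  "Tinv k z = z - axis k (\<i> * qf k z)"

lemma qf_axis: "qf k (z + axis k c) = qf k z" "qf k (z - axis k c) = qf k z"
  unfolding qf_def by (auto intro!: sum.cong simp: axis_def)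

lemma Tinv_Tf: "Tinv k (Tf k z) = z" and Tf_Tinv: "Tf k (Tinv k z) = z"
  unfolding Tinv_def Tf_def by (simp_all add: qf_axis)

lemma bl_axis: "bounded_linear (axis k :: 'a::real_normed_vector \<Rightarrow> 'a^'n::finite)"
proof (rule bounded_linear_intro[where K=1])
  show "axis k (x + y) = axis k x + axis k y" for x y :: 'a by (simp add: axis_def vec_eq_iff)
  show "axis k (r *\<^sub>R x) = r *\<^sub>R axis k x" for r x by (simp add: axis_def vec_eq_iff)
  show "norm (axis k x) \<le> norm x * 1" for x :: 'a
    unfolding norm_vec_def axis_def L2_set_def
    by (simp add: sum.delta if_distrib[of "\<lambda>x. (norm x)^2"] cong: if_cong)
qed

lemma qf_deriv: "(qf k has_derivative (\<lambda>h. 2 * (\<Sum>j\<in>-{k}. 2 * z$j * h$j))) (at z)"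
proof -
  have d: "((\<lambda>x. (x$j)^2) has_derivative (\<lambda>h. 2 * z$j * h$j)) (at z)" for j
    by (rule derivative_eq_intros bounded_linear.has_derivative[OF bounded_linear_vec_nth] has_derivative_ident | simp add: fun_eq_iff mult_ac)+
  have "((\<lambda>x. \<Sum>j\<in>-{k}. (x$j)^2) has_derivative (\<lambda>h. \<Sum>j\<in>-{k}. 2 * z$j * h$j)) (at z)"
    by (rule has_derivative_sum) (rule d)
  then have "((\<lambda>x. 3/5 + 2 * (\<Sum>j\<in>-{k}. (x$j)^2)) has_derivative (\<lambda>h. 0 + 2 * (\<Sum>j\<in>-{k}. 2 * z$j * h$j))) (at z)"
    by (intro has_derivative_add has_derivative_const has_derivative_mult_right)
  then show ?thesis unfolding qf_def by simp
qed

definition LT :: "'n::finite \<Rightarrow> complex^'n \<Rightarrow> complex^'n \<Rightarrow> complex^'n" where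
  "LT k z h = h + axis k (\<i> * (2 * (\<Sum>j\<in>-{k}. 2 * z$j * h$j)))"

lemma Tf_deriv: "(Tf k has_derivative LT k z) (at z)"
proof -
  have "((\<lambda>x. \<i> * qf k x) has_derivative (\<lambda>h. \<i> * (2 * (\<Sum>j\<in>-{k}. 2 * z$j * h$j)))) (at z)"
    by (intro has_derivative_mult_right qf_deriv)
  from bounded_linear.has_derivative[OF bl_axis this, of k]
  have "((\<lambda>x. axis k (\<i> * qf k x)) has_derivative (\<lambda>h. axis k (\<i> * (2 * (\<Sum>j\<in>-{k}. 2 * z$j * h$j))))) (at z)" .
  from has_derivative_add[OF has_derivative_ident this] show ?thesis
    unfolding Tf_def[abs_def] LT_def[abs_def] by simp
qed

lemma phi_deriv: "((\<lambda>z. d *\<^sub>R Tf k z) has_derivative (\<lambda>h. d *\<^sub>R LT k z h)) (at z)"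
  by (rule bounded_linear.has_derivative[OF bounded_linear_scaleR_right Tf_deriv])

lemma LT_clinear: "d *\<^sub>R LT k z (c *s v) = c *s (d *\<^sub>R LT k z v)"
  by (simp add: vec_eq_iff LT_def axis_def scaleR_conv_of_real sum_distrib_left algebra_simps)

lemma LT_inj: assumes "d \<noteq> 0" shows "inj (\<lambda>h. d *\<^sub>R LT k z h)"
proof (rule injI)
  fix x y assume e: "d *\<^sub>R LT k z x = d *\<^sub>R LT k z y"
  then have e2: "LT k z x = LT k z y" using assms by simp
  have o: "x$j = y$j" if "j \<noteq> k" for j
    using arg_cong[OF e2, of "\<lambda>v. v$j"] that by (simp add: LT_def axis_def)
  have "(\<Sum>j\<in>-{k}. 2 * z$j * x$j) = (\<Sum>j\<in>-{k}. 2 * z$j * y$j)"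
    by (rule sum.cong) (auto simp: o)
  then have "x$k = y$k"
    using arg_cong[OF e2, of "\<lambda>v. v$k"] by (simp add: LT_def axis_def)
  with o show "x = y" by (metis vec_eq_iff)
qed

lemma qf_cont: "continuous_on S (qf k)"
  using qf_deriv has_derivative_continuous continuous_at_imp_continuous_on by blast

lemma Tf_cont: "continuous_on S (Tf k)"
  unfolding Tf_def[abs_def]
  by (intro continuous_intros bounded_linear.continuous_on[OF bl_axis] qf_cont)

lemma Tinv_cont: "continuous_on S (Tinv k)"
  unfolding Tinv_def[abs_def]
  by (intro continuous_intros bounded_linear.continuous_on[OF bl_axis] qf_cont)

lemma open_upd: "open (unit_polydisc :: (complex^'n::finite) set)"
proof -
  have e: "unit_polydisc = (\<Inter>i. {z::complex^'n. norm (z$i) < 1})"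
    by (auto simp: unit_polydisc_def polydisc_def)
  moreover have "open {z::complex^'n. norm (z$i) < 1}" for i
    by (intro open_Collect_less continuous_intros)
  then show ?thesis unfolding e by (intro open_INT) auto
qed

lemma norm_vec_le_sum: "norm (x::'a::real_normed_vector^'n::finite) \<le> (\<Sum>i\<in>UNIV. norm (x$i))"
  unfolding norm_vec_def by (rule L2_set_le_sum) simp

lemma Tf_bound:
  fixes z :: "complex^'n::finite"
  assumes "z \<in> unit_polydisc"
  shows "cmod (Tf k z $ j) \<le> 4 * real CARD('n)"
proof -
  have zb: "cmod (z$i) < 1" for i using assms by (auto simp: unit_polydisc_def polydisc_def)
  have "cmod (\<Sum>i\<in>-{k}. (z$i)^2) \<le> (\<Sum>i\<in>-{k}. cmod ((z$i)^2))" by (rule norm_sum)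
  also have "\<dots> \<le> (\<Sum>i\<in>-{k}. 1)"
  proof (rule sum_mono)
    fix i have "cmod ((z$i)^2) = (cmod (z$i))^2" by (simp add: norm_power)
    also have "\<dots> \<le> 1" using zb[of i] by (simp add: abs_square_le_1)
    finally show "cmod ((z$i)^2) \<le> 1" .
  qed
  also have "\<dots> \<le> real CARD('n)" by (simp add: card_mono)
  finally have s: "cmod (\<Sum>i\<in>-{k}. (z$i)^2) \<le> real CARD('n)" .
  have "cmod (qf k z) \<le> 3/5 + 2 * real CARD('n)"
    unfolding qf_def using norm_triangle_ineq[of "3/5::complex" "2 * (\<Sum>i\<in>-{k}. (z$i)^2)"] s
    by (simp add: norm_mult)
  moreover have "cmod (Tf k z $ j) \<le> cmod (z$j) + cmod (qf k z)"
  proof (cases "j = k")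
    case True
    then have "Tf k z $ j = z$j + \<i> * qf k z" by (simp add: Tf_def)
    then show ?thesis using norm_triangle_ineq[of "z$j" "\<i> * qf k z"] by (simp add: norm_mult)
  next
    case False
    then show ?thesis by (simp add: Tf_def axis_def)
  qed
  moreover have "real CARD('n) \<ge> 1" by (simp add: Suc_le_eq)
  ultimately show ?thesis using zb[of j] by linarith
qed

theorem lemma2p7:
  fixes \<psi> :: "(real ^ 'n::{finite,wellorder}) \<Rightarrow> real ^ 'n::{finite,wellorder}"
    and V :: "(real ^ 'n::{finite,wellorder}) set"
    and D :: "real ^ 'n::{finite,wellorder} \<Rightarrow> ((real ^ 'n::{finite,wellorder}) \<Rightarrow>\<^sub>L (real ^ 'n::{finite,wellorder}))"
    and U :: "(complex ^ 'n::{finite,wellorder}) set"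
  assumes "open V" and "0 \<in> V"
    and "C2_on V \<psi> D"
    and "\<psi> 0 = 0"
    and "D 0 = 0"
    and "open U" and "0 \<in> U"
  shows "\<exists>\<phi> :: complex ^ 'n::{finite,wellorder} \<Rightarrow> complex ^ 'n::{finite,wellorder}.
           holomorphic_embedding \<phi> unit_polydisc \<and> \<phi> ` unit_polydisc \<subseteq> U \<and>
           0 \<in> \<phi> ` unit_polydisc \<and>
           \<phi> ` hartogs1 \<inter> {z. re_part z \<in> V \<and> im_part z = \<psi> (re_part z)} = {}"
proof -
  define N where "N = real CARD('n)"
  have N1: "N \<ge> 1" unfolding N_def by (simp add: Suc_le_eq)
  define k :: 'n where "k = first_idx"
  define \<eta> where "\<eta> = 1 / (80 * N^3)"
  have \<eta>pos: "\<eta> > 0" using N1 unfolding \<eta>_def by simp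
  have "(\<psi> has_derivative blinfun_apply (D 0)) (at 0)"
    using assms(2,3) unfolding C2_on_def by blast
  moreover have "blinfun_apply (D 0) = (\<lambda>_. 0)" using assms(5) by (simp add: fun_eq_iff)
  ultimately have "(\<psi> has_derivative (\<lambda>_. 0)) (at 0)" by simp
  then obtain d where d: "d > 0" "\<And>y. norm y < d \<Longrightarrow> norm (\<psi> y) \<le> \<eta> * norm y"
    using \<eta>pos assms(4) unfolding has_derivative_at_alt by force
  obtain r where r: "r > 0" "ball 0 r \<subseteq> U" using assms(6,7) open_contains_ball by blast
  define \<delta> where "\<delta> = min d r / (8 * N^2)"
  have \<delta>pos: "\<delta> > 0" using d r N1 unfolding \<delta>_def by simp
  have \<delta>d: "4 * N^2 * \<delta> < d" and \<delta>r: "4 * N^2 * \<delta> < r"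
    using d r N1 unfolding \<delta>_def by (auto simp: field_simps)
  define \<phi> where "\<phi> = (\<lambda>z. \<delta> *\<^sub>R Tf k z)"
  have wb: "cmod (\<phi> z $ j) \<le> \<delta> * (4 * N)" if "z \<in> unit_polydisc" for z j
    using Tf_bound[OF that, of k j] \<delta>pos unfolding \<phi>_def N_def by (simp add: mult_left_mono)
  have sumb: "(\<Sum>i\<in>UNIV. cmod (\<phi> z $ i)) \<le> 4 * N^2 * \<delta>" if "z \<in> unit_polydisc" for z
  proof -
    have "(\<Sum>i\<in>UNIV. cmod (\<phi> z $ i)) \<le> (\<Sum>i\<in>(UNIV::'n set). \<delta> * (4 * N))"
      by (rule sum_mono) (rule wb[OF that])
    also have "\<dots> = 4 * N^2 * \<delta>" by (simp add: N_def power2_eq_square)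
    finally show ?thesis .
  qed
  have normb: "norm (\<phi> z) \<le> 4 * N^2 * \<delta>" if "z \<in> unit_polydisc" for z
    using norm_vec_le_sum[of "\<phi> z"] sumb[OF that] by simp
  have renormb: "norm (re_part (\<phi> z)) \<le> 4 * N^2 * \<delta>" if "z \<in> unit_polydisc" for z
  proof -
    have "norm (re_part (\<phi> z)) \<le> (\<Sum>i\<in>UNIV. norm (re_part (\<phi> z) $ i))" by (rule norm_vec_le_sum)
    also have "\<dots> \<le> (\<Sum>i\<in>UNIV. cmod (\<phi> z $ i))"
      by (rule sum_mono) (simp add: re_part_def abs_Re_le_cmod)
    finally show ?thesis using sumb[OF that] by simp
  qed
  have hol: "holomorphic_n \<phi> unit_polydisc"
    unfolding holomorphic_n_def \<phi>_def using open_upd phi_deriv LT_clinear by blast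
  have injd: "\<forall>z\<in>unit_polydisc. \<forall>L. (\<phi> has_derivative L) (at z) \<longrightarrow> inj L"
  proof (intro ballI allI impI)
    fix z L assume "(\<phi> has_derivative L) (at z)"
    moreover have "(\<phi> has_derivative (\<lambda>h. \<delta> *\<^sub>R LT k z h)) (at z)" unfolding \<phi>_def by (rule phi_deriv)
    ultimately have "L = (\<lambda>h. \<delta> *\<^sub>R LT k z h)" by (rule has_derivative_unique)
    then show "inj L" using LT_inj[of \<delta> k z] \<delta>pos by simp
  qed
  define g where "g = (\<lambda>w. Tinv k (inverse \<delta> *\<^sub>R w))"
  have gphi: "g (\<phi> z) = z" for z using \<delta>pos unfolding g_def \<phi>_def by (simp add: Tinv_Tf)
  have injphi: "inj_on \<phi> unit_polydisc" by (metis gphi inj_on_inverseI)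
  have homeo: "homeomorphism unit_polydisc (\<phi> ` unit_polydisc) \<phi> g"
  proof (rule homeomorphismI)
    show "continuous_on unit_polydisc \<phi>" unfolding \<phi>_def by (intro continuous_intros Tf_cont)
    show "continuous_on (\<phi> ` unit_polydisc) g" unfolding g_def
      by (rule continuous_on_compose2[OF Tinv_cont[of UNIV]]) (auto intro: continuous_intros)
  qed (auto simp: gphi)
  have emb: "holomorphic_embedding \<phi> unit_polydisc"
    unfolding holomorphic_embedding_def using hol injphi injd homeo by blast
  have sub: "\<phi> ` unit_polydisc \<subseteq> U"
  proof
    fix w assume "w \<in> \<phi> ` unit_polydisc"
    then obtain z where z: "z \<in> unit_polydisc" "w = \<phi> z" by blast
    then have "norm w < r" using normb[OF z(1)] \<delta>r by simp
    then show "w \<in> U" using r by auto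
  qed
  define z0 :: "complex^'n::{finite,wellorder}" where "z0 = axis k (- \<i> * (3/5))"
  have "qf k z0 = 3/5" unfolding qf_def z0_def axis_def by simp
  then have "\<phi> z0 = 0" unfolding \<phi>_def Tf_def z0_def by (simp add: axis_def vec_eq_iff)
  moreover have "z0 \<in> unit_polydisc"
    unfolding unit_polydisc_def polydisc_def z0_def by (simp add: axis_def norm_mult)
  ultimately have zero: "0 \<in> \<phi> ` unit_polydisc" by force
  define \<epsilon> where "\<epsilon> = 1 / (20 * N)"
  have \<epsilon>pos: "\<epsilon> > 0" and \<epsilon>s: "\<epsilon> \<le> 1/20" and N\<epsilon>: "N * \<epsilon> = 1/20"
    using N1 unfolding \<epsilon>_def by (auto simp: field_simps)
  have \<epsilon>sq: "\<epsilon>^2 \<le> \<epsilon>/20" using \<epsilon>pos \<epsilon>s by (simp add: power2_eq_square mult_left_mono)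
  have N\<epsilon>sq: "N * \<epsilon>^2 = \<epsilon>/20" using N\<epsilon> by (simp add: power2_eq_square)
  have disj: "False" if zH: "z \<in> hartogs1" and inV: "re_part (\<phi> z) \<in> V"
     and onM: "im_part (\<phi> z) = \<psi> (re_part (\<phi> z))" for z
  proof -
    have zU: "z \<in> unit_polydisc"
    proof -
      have "cmod (z$i) < 1" for i
      proof (cases "i = k")
        case True then show ?thesis using zH unfolding hartogs1_def k_def by auto
      next
        case False then show ?thesis using zH unfolding hartogs1_def k_def polydisc_def by auto
      qed
      then show ?thesis unfolding unit_polydisc_def polydisc_def by auto
    qed
    define x where "x = re_part (\<phi> z)"
    have "norm x < d" using renormb[OF zU] \<delta>d unfolding x_def by simp
    then have "norm (\<psi> x) \<le> \<eta> * norm x" by (rule d(2))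
    also have "\<dots> \<le> \<eta> * (4 * N^2 * \<delta>)"
      using renormb[OF zU] \<eta>pos unfolding x_def by (simp add: mult_left_mono)
    also have "\<eta> * (4 * N^2 * \<delta>) = \<delta> * \<epsilon>"
      unfolding \<eta>_def \<epsilon>_def using N1 by (simp add: field_simps power2_eq_square power3_eq_cube)
    finally have p: "norm (\<psi> x) \<le> \<delta> * \<epsilon>" .
    have imb: "\<bar>Im (Tf k z $ j)\<bar> \<le> \<epsilon>" for j
    proof -
      have "Im (\<phi> z $ j) = \<psi> x $ j" using arg_cong[OF onM, of "\<lambda>v. v$j"]
        unfolding x_def by (simp add: im_part_def)
      then have "\<bar>Im (\<phi> z $ j)\<bar> \<le> \<delta> * \<epsilon>" using p component_le_norm_cart[of "\<psi> x" j] by simp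
      moreover have "Im (\<phi> z $ j) = \<delta> * Im (Tf k z $ j)" unfolding \<phi>_def by simp
      ultimately have "\<delta> * \<bar>Im (Tf k z $ j)\<bar> \<le> \<delta> * \<epsilon>" using \<delta>pos by (simp add: abs_mult)
      then show ?thesis using \<delta>pos by simp
    qed
    have imo: "\<bar>Im (z$j)\<bar> \<le> \<epsilon>" if "j \<noteq> k" for j
      using imb[of j] that by (simp add: Tf_def axis_def)
    define S where "S = (\<Sum>j\<in>-{k}. (Re (z$j))^2)"
    define I where "I = (\<Sum>j\<in>-{k}. (Im (z$j))^2)"
    have Tk: "Im (Tf k z $ k) = Im (z$k) + 3/5 + 2 * S - 2 * I"
      unfolding Tf_def qf_def S_def I_def by (simp add: Re_power2 sum_subtractf algebra_simps)
    have S0: "S \<ge> 0" unfolding S_def by (rule sum_nonneg) simp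
    have "I \<le> (\<Sum>j\<in>-{k}. \<epsilon>^2)" unfolding I_def
    proof (rule sum_mono)
      fix j assume "j \<in> -{k}"
      then have "\<bar>Im (z$j)\<bar> \<le> \<epsilon>" using imo by auto
      then show "(Im (z$j))^2 \<le> \<epsilon>^2" by (metis abs_le_square_iff abs_of_pos \<epsilon>pos)
    qed
    also have "\<dots> \<le> N * \<epsilon>^2" unfolding N_def by (simp add: card_mono mult_right_mono)
    finally have Ib: "I \<le> \<epsilon>/20" using N\<epsilon>sq by simp
    have up: "Im (z$k) + 3/5 + 2 * S - 2 * I \<le> \<epsilon>" using imb[of k] Tk by simp
    have "cmod (z$k) < 1/2 \<or> (cmod (z$k) < 1 \<and> (\<exists>j. j \<noteq> k \<and> cmod (z$j) > 1/2))"
      using zH unfolding hartogs1_def k_def polydisc_def cpolydisc_def by (auto simp: not_le)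
    then show False
    proof
      assume "cmod (z$k) < 1/2"
      then have "Im (z$k) > -1/2" using abs_Im_le_cmod[of "z$k"] by linarith
      then show False using up S0 Ib \<epsilon>s by linarith
    next
      assume "cmod (z$k) < 1 \<and> (\<exists>j. j \<noteq> k \<and> cmod (z$j) > 1/2)"
      then obtain j where j: "j \<noteq> k" "cmod (z$j) > 1/2" and zk: "cmod (z$k) < 1" by blast
      have "Im (z$k) > -1" using abs_Im_le_cmod[of "z$k"] zk by linarith
      have "(cmod (z$j))^2 > (1/2)^2" using j(2) by (intro power_strict_mono) auto
      then have "(Re (z$j))^2 + (Im (z$j))^2 > 1/4" using cmod_power2[of "z$j"] by (simp add: power2_eq_square)
      moreover have "(Im (z$j))^2 \<le> \<epsilon>^2" using imo[OF j(1)] by (metis abs_le_square_iff abs_of_pos \<epsilon>pos)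
      moreover have "(Re (z$j))^2 \<le> S" unfolding S_def
        using j(1) by (intro member_le_sum) auto
      ultimately show False using up Ib \<epsilon>sq \<epsilon>s \<open>Im (z$k) > -1\<close> by linarith
    qed
  qed
  show ?thesis using emb sub zero disj by blast
qed

end
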